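(* Let $f$ be a $C^{1}$ diffeomorphism of a compact Riemannian manifold $M$ admitting a partially hyperbolic splitting $TM=E^{s}\oplus_{\prec} E^{1}\oplus_{\prec} \cdots \oplus_{\prec}E^{l}\oplus_{\prec} E^{u}$ with $\dim E^{i}=1$ for $1\leq i\leq l$; write $s=\dim E^s$, $u=\dim E^u$. Then there exists $T_{2}\in\mathbb{N}$ such that for all $1\leq i_{s}\leq s$, $1\leq i_{u}\leq u$, all $x\in M$ and all $n\geq T_{2}$, $$\max_{\substack{V\subset T_{x}M\\\dim V=i_{s}+l+u}}|\det Df_{x}^{n}|_{V}|\leq\max_{\substack{V\subset T_{x}M\\\dim V=l+u}}|\det Df_{x}^{n}|_{V}|\quad\text{and}\quad \max_{\substack{V\subset T_{x}M\\\dim V=i_{u}}}|\det Df_{x}^{n}|_{V}|\leq\max_{\substack{V\subset T_{x}M\\\dim V=u}}|\det Df_{x}^{n}|_{V}|.$$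
   Context: For a linear subspace $V\subset T_xM$, $|\det Df^n_x|_{V}|$ is the absolute determinant of $Df^n_x|_V:V\to Df^n_x(V)$ w.r.t. the Riemannian inner products. Partially hyperbolic splitting: each $(E^s\oplus E^1\oplus\cdots\oplus E^i)\oplus_\prec(E^{i+1}\oplus\cdots\oplus E^l\oplus E^u)$, $0\le i\le l$, is a dominated splitting (continuous $Df$-invariant subbundles $E,F$ with $\frac{\|Df^k_x v_E\|}{\|v_E\|}\le C\lambda^k\frac{\|Df^k_x v_F\|}{\|v_F\|}$ for some $C>0,\lambda\in(0,1)$), and there are $C>0,\lambda\in(0,1)$ with $\|Df^k_x v^s\|\le C\lambda^k\|v^s\|$ for $v^s\in E^s(x)$ and $\|Df^{-k}_x v^u\|\le C\lambda^k\|v^u\|$ for $v^u\in E^u(x)$, all $k\in\mathbb N$. *)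

theory Defs
  imports "HOL-Analysis.Analysis"
begin

text \<open>Compact Riemannian manifolds are modelled as compact C1 submanifolds of a
Euclidean space carrying the induced inner product (every compact Riemannian
manifold admits an isometric embedding, Nash / Nash-Kuiper).\<close>

definition C1_on :: "'a::euclidean_space set \<Rightarrow> ('a \<Rightarrow> 'b::euclidean_space) \<Rightarrow> bool" where
  "C1_on U F \<longleftrightarrow> (\<exists>F'. (\<forall>x\<in>U. (F has_derivative blinfun_apply (F' x)) (at x)) \<and> continuous_on U F')"

definition C1_diffeo_open :: "'a::euclidean_space set \<Rightarrow> 'a set \<Rightarrow> ('a \<Rightarrow> 'a) \<Rightarrow> bool" where
  "C1_diffeo_open U W \<phi> \<longleftrightarrow> open U \<and> open W \<and> bij_betw \<phi> U W \<and> C1_on U \<phi> \<and> C1_on W (inv_into U \<phi>)"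

definition C1_submanifold :: "'a::euclidean_space set \<Rightarrow> bool" where
  "C1_submanifold M \<longleftrightarrow>
     (\<forall>x\<in>M. \<exists>U W \<phi> S. x \<in> U \<and> C1_diffeo_open U W \<phi> \<and> subspace S \<and> \<phi> ` (M \<inter> U) = S \<inter> W)"

definition tangent_space :: "'a::euclidean_space set \<Rightarrow> 'a \<Rightarrow> 'a set" where
  "tangent_space M x = {v. \<exists>\<gamma>::real \<Rightarrow> 'a. (\<forall>t. \<gamma> t \<in> M) \<and> \<gamma> 0 = x \<and> (\<gamma> has_vector_derivative v) (at 0)}"

definition C1_map_on :: "'a::euclidean_space set \<Rightarrow> ('a \<Rightarrow> 'a) \<Rightarrow> bool" where
  "C1_map_on M g \<longleftrightarrow> g ` M \<subseteq> M \<and>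
     (\<forall>x\<in>M. \<exists>U F. open U \<and> x \<in> U \<and> C1_on U F \<and> (\<forall>y\<in>M \<inter> U. F y = g y))"

definition C1_diffeo_of :: "'a::euclidean_space set \<Rightarrow> ('a \<Rightarrow> 'a) \<Rightarrow> bool" where
  "C1_diffeo_of M f \<longleftrightarrow> bij_betw f M M \<and> C1_map_on M f \<and> C1_map_on M (inv_into M f)"

text \<open>Derivative of g at x (along M); its restriction to the tangent space is well defined.\<close>
definition diffM :: "'a::euclidean_space set \<Rightarrow> ('a \<Rightarrow> 'a) \<Rightarrow> 'a \<Rightarrow> ('a \<Rightarrow> 'a)" where
  "diffM M g x = (SOME D. (g has_derivative D) (at x within M))"

definition det_nat :: "nat \<Rightarrow> (nat \<Rightarrow> nat \<Rightarrow> real) \<Rightarrow> real" where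
  "det_nat k A = (\<Sum>p | p permutes {..<k}. of_int (sign p) * (\<Prod>i<k. A i (p i)))"

definition gram_vol :: "nat \<Rightarrow> (nat \<Rightarrow> 'a::euclidean_space) \<Rightarrow> real" where
  "gram_vol k b = sqrt (det_nat k (\<lambda>i j. b i \<bullet> b j))"

definition abs_det_on :: "('a::euclidean_space \<Rightarrow> 'a) \<Rightarrow> 'a set \<Rightarrow> real" where
  "abs_det_on L V =
     (let k = dim V;
          b = (SOME b :: nat \<Rightarrow> 'a. inj_on b {..<k} \<and> independent (b ` {..<k}) \<and> span (b ` {..<k}) = V)
      in gram_vol k (L \<circ> b) / gram_vol k b)"

definition max_det :: "('a::euclidean_space \<Rightarrow> 'a) \<Rightarrow> 'a set \<Rightarrow> nat \<Rightarrow> real" where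
  "max_det L T k = Sup {abs_det_on L V | V. subspace V \<and> V \<subseteq> T \<and> dim V = k}"

text \<open>Continuity of a field of subspaces (lower semicontinuity; together with the
constant dimensions assumed below this is continuity).\<close>
definition cont_subbundle :: "'a::euclidean_space set \<Rightarrow> ('a \<Rightarrow> 'a set) \<Rightarrow> bool" where
  "cont_subbundle M E \<longleftrightarrow>
     (\<forall>x\<in>M. \<forall>v\<in>E x. \<forall>y. (\<forall>n. y n \<in> M) \<and> y \<longlonglongrightarrow> x \<longrightarrow>
        (\<exists>w. (\<forall>n. w n \<in> E (y n)) \<and> w \<longlonglongrightarrow> v))"

definition invariant_subbundle :: "'a::euclidean_space set \<Rightarrow> ('a \<Rightarrow> 'a) \<Rightarrow> ('a \<Rightarrow> 'a set) \<Rightarrow> bool" where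
  "invariant_subbundle M f E \<longleftrightarrow> (\<forall>x\<in>M. diffM M f x ` E x = E (f x))"

definition dominated_splitting ::
  "'a::euclidean_space set \<Rightarrow> ('a \<Rightarrow> 'a) \<Rightarrow> ('a \<Rightarrow> 'a set) \<Rightarrow> ('a \<Rightarrow> 'a set) \<Rightarrow> bool" where
  "dominated_splitting M f E F \<longleftrightarrow>
     cont_subbundle M E \<and> cont_subbundle M F \<and> invariant_subbundle M f E \<and> invariant_subbundle M f F \<and>
     (\<exists>C lam. C > 0 \<and> 0 < lam \<and> lam < 1 \<and>
        (\<forall>x\<in>M. \<forall>k::nat. \<forall>vE\<in>E x. \<forall>vF\<in>F x. vE \<noteq> 0 \<longrightarrow> vF \<noteq> 0 \<longrightarrow>
           norm (diffM M (f ^^ k) x vE) / norm vE \<le> C * lam ^ k * (norm (diffM M (f ^^ k) x vF) / norm vF)))"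

definition partially_hyperbolic_splitting ::
  "'a::euclidean_space set \<Rightarrow> ('a \<Rightarrow> 'a) \<Rightarrow> ('a \<Rightarrow> 'a set) \<Rightarrow> (nat \<Rightarrow> 'a \<Rightarrow> 'a set) \<Rightarrow> nat \<Rightarrow> ('a \<Rightarrow> 'a set) \<Rightarrow> bool" where
  "partially_hyperbolic_splitting M f Es Ec l Eu \<longleftrightarrow>
     (\<forall>x\<in>M. subspace (Es x) \<and> subspace (Eu x) \<and> (\<forall>i\<in>{1..l}. subspace (Ec i x)) \<and>
        span (Es x \<union> (\<Union>i\<in>{1..l}. Ec i x) \<union> Eu x) = tangent_space M x \<and>
        dim (Es x) + (\<Sum>i=1..l. dim (Ec i x)) + dim (Eu x) = dim (tangent_space M x)) \<and>
     (\<forall>i\<in>{0..l}. dominated_splitting M f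
        (\<lambda>x. span (Es x \<union> (\<Union>j\<in>{1..i}. Ec j x)))
        (\<lambda>x. span ((\<Union>j\<in>{i+1..l}. Ec j x) \<union> Eu x))) \<and>
     (\<exists>C lam. C > 0 \<and> 0 < lam \<and> lam < 1 \<and>
        (\<forall>x\<in>M. \<forall>k::nat.
           (\<forall>v\<in>Es x. norm (diffM M (f ^^ k) x v) \<le> C * lam ^ k * norm v) \<and>
           (\<forall>v\<in>Eu x. norm (diffM M (inv_into M f ^^ k) x v) \<le> C * lam ^ k * norm v)))"

end

theory Submission
  imports Defs "Jordan_Normal_Form.Determinant"
begin


definition gm :: "nat \<Rightarrow> (nat \<Rightarrow> nat \<Rightarrow> real) \<Rightarrow> real mat" where
  "gm k A = mat k k (\<lambda>(i,j). A i j)"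

lemma det_nat_det: "det_nat k A = Determinant.det (gm k A)"
  unfolding det_nat_def gm_def det_def by (simp add: atLeast0LessThan)

lemma det_nat_cong: "(\<And>i j. i < k \<Longrightarrow> j < k \<Longrightarrow> A i j = B i j) \<Longrightarrow> det_nat k A = det_nat k B"
proof -
  assume "\<And>i j. i < k \<Longrightarrow> j < k \<Longrightarrow> A i j = B i j"
  then have "gm k A = gm k B" unfolding gm_def by (intro eq_matI) auto
  then show ?thesis by (simp add: det_nat_det)
qed

lemma det_nat_0: "det_nat 0 A = 1"
  by (simp add: det_nat_det gm_def det_def)

lemma det_nat_change:
  fixes G :: "nat \<Rightarrow> nat \<Rightarrow> real"
  shows "det_nat k (\<lambda>i j. \<Sum>a<k. \<Sum>c<k. P a i * P c j * G a c) = (det_nat k P)^2 * det_nat k G"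
proof -
  have eq: "gm k (\<lambda>i j. \<Sum>a<k. \<Sum>c<k. P a i * P c j * G a c) = transpose_mat (gm k P) * gm k G * gm k P"
  proof (intro eq_matI)
    fix i j assume i: "i < dim_row (transpose_mat (gm k P) * gm k G * gm k P)"
      and j: "j < dim_col (transpose_mat (gm k P) * gm k G * gm k P)"
    then have ik: "i < k" and jk: "j < k" by (auto simp: gm_def)
    have "(transpose_mat (gm k P) * gm k G * gm k P) $$ (i,j) = (\<Sum>c<k. (\<Sum>a<k. P a i * G a c) * P c j)"
      using ik jk by (simp add: gm_def scalar_prod_def atLeast0LessThan)
    also have "\<dots> = (\<Sum>a<k. \<Sum>c<k. P a i * P c j * G a c)"
      by (simp add: sum_distrib_right sum_distrib_left mult_ac) (subst sum.swap, simp add: mult_ac)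
    finally show "gm k (\<lambda>i j. \<Sum>a<k. \<Sum>c<k. P a i * P c j * G a c) $$ (i, j) = (transpose_mat (gm k P) * gm k G * gm k P) $$ (i, j)"
      using ik jk by (simp add: gm_def)
  qed (auto simp: gm_def)
  have c: "gm k P \<in> carrier_mat k k" "gm k G \<in> carrier_mat k k" "transpose_mat (gm k P) \<in> carrier_mat k k"
    by (auto simp: gm_def)
  show ?thesis
    unfolding det_nat_det eq
    apply (subst det_mult[of _ k]) 
      apply (rule mult_carrier_mat[OF c(3) c(2)])
     apply (rule c(1))
    apply (subst det_mult[OF c(3) c(2)])
    apply (subst det_transpose[OF c(1)])
    by (simp add: power2_eq_square mult_ac)
qed

lemma det_nat_last:
  assumes "\<And>j. j < k \<Longrightarrow> A k j = 0"
  shows "det_nat (Suc k) A = det_nat k A * A k k"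
proof -
  have c: "gm (Suc k) A \<in> carrier_mat (Suc k) (Suc k)" by (simp add: gm_def)
  have "Determinant.det (gm (Suc k) A) = (\<Sum>j<Suc k. gm (Suc k) A $$ (k,j) * cofactor (gm (Suc k) A) k j)"
    by (rule laplace_expansion_row[OF c]) simp
  also have "\<dots> = gm (Suc k) A $$ (k,k) * cofactor (gm (Suc k) A) k k"
    using assms by (simp add: gm_def)
  also have "mat_delete (gm (Suc k) A) k k = gm k A"
    by (intro eq_matI) (auto simp: mat_delete_def gm_def)
  then have "cofactor (gm (Suc k) A) k k = Determinant.det (gm k A)"
    by (simp add: cofactor_def)
  finally show ?thesis by (simp add: det_nat_det gm_def mult_ac)
qed

lemma det_nat_unitri:
  assumes "\<And>i j. i < k \<Longrightarrow> j < i \<Longrightarrow> E i j = 0" "\<And>i. i < k \<Longrightarrow> E i i = 1"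
  shows "det_nat k E = 1"
proof -
  have "upper_triangular (gm k E)" using assms unfolding upper_triangular_def by (auto simp: gm_def)
  then have "Determinant.det (gm k E) = prod_list (diag_mat (gm k E))"
    by (rule det_upper_triangular[where n=k]) (simp add: gm_def)
  also have "\<dots> = 1" using assms by (simp add: prod_list_diag_prod gm_def)
  finally show ?thesis by (simp add: det_nat_det)
qed

no_notation Matrix.scalar_prod (infix "\<bullet>" 70)
hide_const (open) Matrix.orthogonal

abbreviation G :: "nat \<Rightarrow> (nat \<Rightarrow> 'a::euclidean_space) \<Rightarrow> real" where
  "G k b \<equiv> det_nat k (\<lambda>i j. b i \<bullet> b j)"

lemma span_idx:
  fixes b :: "nat \<Rightarrow> 'a::euclidean_space"
  shows "p \<in> span (b ` {..<k}) \<Longrightarrow> \<exists>a. p = (\<Sum>i<k. a i *\<^sub>R b i)"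
proof (induction k arbitrary: p)
  case 0
  then show ?case by simp
next
  case (Suc k)
  have "b ` {..<Suc k} = insert (b k) (b ` {..<k})" by (auto simp: lessThan_Suc)
  with Suc.prems obtain c where "p - c *\<^sub>R b k \<in> span (b ` {..<k})"
    using span_breakdown_eq by metis
  from Suc.IH[OF this] obtain a where a: "p - c *\<^sub>R b k = (\<Sum>i<k. a i *\<^sub>R b i)" by blast
  show ?case
    by (rule exI[of _ "a(k := c)"]) (simp add: a[symmetric] lessThan_Suc)
qed

lemma gram_change:
  fixes b c :: "nat \<Rightarrow> 'a::euclidean_space"
  assumes "\<And>j. j < k \<Longrightarrow> c j = (\<Sum>i<k. P i j *\<^sub>R b i)"
  shows "G k c = (det_nat k P)^2 * G k b"
proof -
  have "G k c = det_nat k (\<lambda>i j. \<Sum>a<k. \<Sum>d<k. P a i * P d j * (b a \<bullet> b d))"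
    by (rule det_nat_cong) (simp add: assms inner_sum_left inner_sum_right sum_distrib_left mult_ac, subst sum.swap, simp add: mult_ac)
  then show ?thesis by (simp add: det_nat_change)
qed

lemma gram_schur:
  fixes b :: "nat \<Rightarrow> 'a::euclidean_space"
  assumes p: "p \<in> span (b ` {..<k})" and orth: "\<And>i. i < k \<Longrightarrow> (b k - p) \<bullet> b i = 0"
  shows "G (Suc k) b = G k b * ((b k - p) \<bullet> (b k - p))"
proof -
  obtain a where a: "p = (\<Sum>i<k. a i *\<^sub>R b i)" using span_idx[OF p] by blast
  define c where "c = b(k := b k - p)"
  define E where "E = (\<lambda>i j. if i = j then 1 else if j = k \<and> i < k then - a i else (0::real))"
  have cE: "c j = (\<Sum>i<Suc k. E i j *\<^sub>R b i)" if "j < Suc k" for j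
  proof (cases "j = k")
    case True
    have "(\<Sum>i<k. E i j *\<^sub>R b i) = (\<Sum>i<k. (- a i) *\<^sub>R b i)"
      using True by (intro sum.cong) (auto simp: E_def)
    then have "(\<Sum>i<Suc k. E i j *\<^sub>R b i) = b k + (\<Sum>i<k. (- a i) *\<^sub>R b i)"
      using True by (simp add: lessThan_Suc E_def)
    then show ?thesis using True by (simp add: c_def a sum_negf)
  next
    case False
    then have "(\<Sum>i<Suc k. E i j *\<^sub>R b i) = (\<Sum>i<Suc k. (if i = j then b i else 0))"
      by (intro sum.cong) (auto simp: E_def)
    also have "\<dots> = b j" using that by simp
    finally show ?thesis using False by (simp add: c_def)
  qed
  have dE: "det_nat (Suc k) E = 1"
    by (rule det_nat_unitri) (auto simp: E_def)
  have "G (Suc k) c = G (Suc k) b"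
    using gram_change[of "Suc k" c E b] cE dE by simp
  moreover have "G (Suc k) c = G k c * (c k \<bullet> c k)"
    by (rule det_nat_last) (auto simp: c_def orth)
  moreover have "G k c = G k b" by (rule det_nat_cong) (auto simp: c_def)
  ultimately show ?thesis by (simp add: c_def)
qed

lemma gram_decomp:
  fixes b :: "nat \<Rightarrow> 'a::euclidean_space"
  obtains p where "p \<in> span (b ` {..<k})" "\<And>i. i < k \<Longrightarrow> (b k - p) \<bullet> b i = 0"
    "\<And>w. w \<in> span (b ` {..<k}) \<Longrightarrow> (b k - p) \<bullet> w = 0"
proof -
  obtain y z where y: "y \<in> span (b ` {..<k})" and z: "\<And>w. w \<in> span (b ` {..<k}) \<Longrightarrow> orthogonal z w"
    and e: "b k = y + z"
    using orthogonal_subspace_decomp_exists[of "b ` {..<k}" "b k"] by metis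
  have "b k - y = z" using e by simp
  then show ?thesis using that[OF y] z by (auto simp: Linear_Algebra.orthogonal_def span_base)
qed

lemma gram_nonneg:
  fixes b :: "nat \<Rightarrow> 'a::euclidean_space"
  shows "G k b \<ge> 0"
proof (induction k)
  case 0 then show ?case by (simp add: det_nat_0)
next
  case (Suc k)
  obtain p where "p \<in> span (b ` {..<k})" "\<And>i. i < k \<Longrightarrow> (b k - p) \<bullet> b i = 0" using gram_decomp[of b k] by metis
  from gram_schur[OF this] Suc.IH show ?case by simp
qed

lemma gram_le:
  fixes b :: "nat \<Rightarrow> 'a::euclidean_space"
  shows "G (Suc k) b \<le> G k b * (b k \<bullet> b k)"
proof -
  obtain p where p: "p \<in> span (b ` {..<k})" "\<And>i. i < k \<Longrightarrow> (b k - p) \<bullet> b i = 0"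
    "\<And>w. w \<in> span (b ` {..<k}) \<Longrightarrow> (b k - p) \<bullet> w = 0" using gram_decomp[of b k] by metis
  have "b k \<bullet> b k = p \<bullet> p + (b k - p) \<bullet> (b k - p)"
  proof -
    define r where "r = b k - p"
    have rp: "r \<bullet> p = 0" using p(3)[OF p(1)] by (simp add: r_def)
    then have pr: "p \<bullet> r = 0" by (simp add: inner_commute)
    have "b k = p + r" by (simp add: r_def)
    then have "b k \<bullet> b k = (p + r) \<bullet> (p + r)" by simp
    also have "\<dots> = p \<bullet> p + r \<bullet> r" using rp pr by (simp add: inner_add_left inner_add_right)
    finally show ?thesis by (simp add: r_def)
  qed
  then have "(b k - p) \<bullet> (b k - p) \<le> b k \<bullet> b k" by simp
  with gram_schur[OF p(1,2)] gram_nonneg[of k b] show ?thesis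
    by (simp add: mult_left_mono)
qed

lemma gram_orth:
  fixes b :: "nat \<Rightarrow> 'a::euclidean_space"
  assumes "\<And>i. i < k \<Longrightarrow> b k \<bullet> b i = 0"
  shows "G (Suc k) b = G k b * (b k \<bullet> b k)"
  using gram_schur[of 0 b k] assms by (simp add: span_zero)

lemma gram_pos:
  fixes b :: "nat \<Rightarrow> 'a::euclidean_space"
  shows "inj_on b {..<k} \<Longrightarrow> independent (b ` {..<k}) \<Longrightarrow> G k b > 0"
proof (induction k)
  case 0 then show ?case by (simp add: det_nat_0)
next
  case (Suc k)
  have ins: "b ` {..<Suc k} = insert (b k) (b ` {..<k})" by (auto simp: lessThan_Suc)
  have nin: "b k \<notin> b ` {..<k}"
  proof
    assume "b k \<in> b ` {..<k}"
    then obtain i where "i < k" "b i = b k" by auto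
    with Suc.prems(1) show False unfolding inj_on_def by (metis lessThan_iff less_Suc_eq nat_neq_iff)
  qed
  have inj: "inj_on b {..<k}" using Suc.prems(1) by (rule inj_on_subset) auto
  have "independent (b ` {..<k}) \<and> b k \<notin> span (b ` {..<k})"
    using Suc.prems(2) nin unfolding ins by (simp add: independent_insert)
  then have ind: "independent (b ` {..<k})" and ns: "b k \<notin> span (b ` {..<k})" by auto
  obtain p where p: "p \<in> span (b ` {..<k})" "\<And>i. i < k \<Longrightarrow> (b k - p) \<bullet> b i = 0" using gram_decomp[of b k] by metis
  have "b k - p \<noteq> 0" using ns p(1) by auto
  then have "(b k - p) \<bullet> (b k - p) > 0" by simp
  with gram_schur[OF p] Suc.IH[OF inj ind] show ?case by simp
qed



definition isb :: "'a::euclidean_space set \<Rightarrow> nat \<Rightarrow> (nat \<Rightarrow> 'a) \<Rightarrow> bool" where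
  "isb V k b \<longleftrightarrow> inj_on b {..<k} \<and> independent (b ` {..<k}) \<and> span (b ` {..<k}) = V"

lemma isb_dim: "isb V k b \<Longrightarrow> dim V = k"
  unfolding isb_def
  by (metis card_image card_lessThan dim_eq_card_independent dim_span)

lemma ex_isb:
  fixes V :: "'a::euclidean_space set"
  assumes "subspace V" shows "\<exists>b. isb V (dim V) b"
proof -
  obtain B where B: "B \<subseteq> V" "independent B" "V \<subseteq> span B" "card B = dim V" by (rule basis_exists)
  have fin: "finite B" using B(2) by (rule finiteI_independent)
  obtain h where h: "bij_betw h {0..<card B} B" using ex_bij_betw_nat_finite[OF fin] by blast
  have im: "h ` {..<dim V} = B" using h B(4) by (simp add: bij_betw_def atLeast0LessThan)
  have inj: "inj_on h {..<dim V}" using h B(4) by (simp add: bij_betw_def atLeast0LessThan)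
  have "span B = V"
    using B(1,3) assms by (metis span_eq_iff span_mono subset_antisym)
  then show ?thesis unfolding isb_def using im inj B(2) by auto
qed

lemma gram_vol_nonneg: "gram_vol k b \<ge> 0"
  unfolding gram_vol_def using gram_nonneg[of k b] by simp

lemma abs_det_nonneg: "abs_det_on L V \<ge> 0"
  unfolding abs_det_on_def Let_def by (intro divide_nonneg_nonneg gram_vol_nonneg)

lemma abs_det_some:
  fixes V :: "'a::euclidean_space set"
  assumes "subspace V"
  obtains b where "isb V (dim V) b" "abs_det_on L V = gram_vol (dim V) (L \<circ> b) / gram_vol (dim V) b"
proof -
  define b where "b = (SOME b :: nat \<Rightarrow> 'a. inj_on b {..<dim V} \<and> independent (b ` {..<dim V}) \<and> span (b ` {..<dim V}) = V)"
  have "isb V (dim V) b" unfolding b_def using ex_isb[OF assms] unfolding isb_def by (rule someI_ex)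
  moreover have "abs_det_on L V = gram_vol (dim V) (L \<circ> b) / gram_vol (dim V) b"
    unfolding abs_det_on_def Let_def b_def ..
  ultimately show ?thesis using that by blast
qed

lemma ratio_basis:
  fixes V :: "'a::euclidean_space set"
  assumes lin: "linear L" and V: "subspace V" and c: "isb V (dim V) c"
  shows "abs_det_on L V = gram_vol (dim V) (L \<circ> c) / gram_vol (dim V) c"
proof -
  define k where "k = dim V"
  obtain b where b: "isb V k b" and ad: "abs_det_on L V = gram_vol k (L \<circ> b) / gram_vol k b"
    using abs_det_some[OF V, of L] unfolding k_def by blast
  have c': "isb V k c" using c by (simp add: k_def)
  have "\<forall>j. \<exists>a. j < k \<longrightarrow> c j = (\<Sum>i<k. a i *\<^sub>R b i)"
  proof
    fix j
    show "\<exists>a. j < k \<longrightarrow> c j = (\<Sum>i<k. a i *\<^sub>R b i)"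
    proof (cases "j < k")
      case True
      then have "c j \<in> V" using c' unfolding isb_def by (auto intro: span_base)
      then have "c j \<in> span (b ` {..<k})" using b unfolding isb_def by simp
      then show ?thesis using span_idx by blast
    qed simp
  qed
  then obtain Q where Q: "\<And>j. j < k \<Longrightarrow> c j = (\<Sum>i<k. Q j i *\<^sub>R b i)" by metis
  define P where "P = (\<lambda>i j. Q j i)"
  have cP: "c j = (\<Sum>i<k. P i j *\<^sub>R b i)" if "j < k" for j using Q[OF that] by (simp add: P_def)
  have LcP: "(L \<circ> c) j = (\<Sum>i<k. P i j *\<^sub>R (L \<circ> b) i)" if "j < k" for j
    using cP[OF that] by (simp add: linear_sum[OF lin] linear_scale[OF lin] o_def)
  have g1: "G k c = (det_nat k P)^2 * G k b" by (rule gram_change) (rule cP)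
  have g2: "G k (L \<circ> c) = (det_nat k P)^2 * G k (L \<circ> b)" by (rule gram_change) (rule LcP)
  have pc: "G k c > 0" using c' unfolding isb_def by (intro gram_pos) auto
  have "det_nat k P \<noteq> 0" using g1 pc by auto
  then have a: "\<bar>det_nat k P\<bar> > 0" by simp
  have "gram_vol k (L \<circ> c) / gram_vol k c
      = (\<bar>det_nat k P\<bar> * gram_vol k (L \<circ> b)) / (\<bar>det_nat k P\<bar> * gram_vol k b)"
    unfolding gram_vol_def g1 g2 by (simp add: real_sqrt_mult)
  also have "\<dots> = gram_vol k (L \<circ> b) / gram_vol k b" using a by simp
  finally show ?thesis using ad by (simp add: k_def)
qed



lemma G_cong: "(\<And>i. i < k \<Longrightarrow> b i = c i) \<Longrightarrow> G k b = G k c"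
  by (rule det_nat_cong) simp

lemma isb_extend:
  fixes W :: "'a::euclidean_space set"
  assumes c: "isb W m c" and z: "z \<notin> W"
  shows "isb (span (insert z W)) (Suc m) (c(m := z))"
proof -
  define c' where "c' = c(m := z)"
  have sp: "span (c ` {..<m}) = W" and inj: "inj_on c {..<m}" and ind: "independent (c ` {..<m})"
    using c unfolding isb_def by blast+
  have im: "c' ` {..<Suc m} = insert z (c ` {..<m})"
  proof -
    have "c' ` {..<m} = c ` {..<m}" by (rule image_cong) (auto simp: c'_def)
    moreover have "c' m = z" by (simp add: c'_def)
    ultimately show ?thesis by (simp add: lessThan_Suc)
  qed
  have zs: "z \<notin> span (c ` {..<m})" unfolding sp by (rule z)
  have zn: "z \<notin> c ` {..<m}"
  proof
    assume "z \<in> c ` {..<m}"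
    then have "z \<in> span (c ` {..<m})" by (rule span_base)
    with zs show False by contradiction
  qed
  have inj': "inj_on c' {..<Suc m}"
  proof -
    have "inj_on c' {..<m}" using inj unfolding inj_on_def c'_def by simp
    moreover have "c' m \<notin> c' ` ({..<m} - {m})" using zn by (auto simp: c'_def)
    ultimately show ?thesis by (simp add: lessThan_Suc)
  qed
  have ind': "independent (c' ` {..<Suc m})" unfolding im using zs ind by (rule independent_insertI)
  have "span (insert z (c ` {..<m})) = span (insert z W)"
  proof
    have "c ` {..<m} \<subseteq> W" using sp span_superset[of "c ` {..<m}"] by simp
    then have "insert z (c ` {..<m}) \<subseteq> insert z W" by blast
    then show "span (insert z (c ` {..<m})) \<subseteq> span (insert z W)" by (rule span_mono)
    have "W \<subseteq> span (insert z (c ` {..<m}))"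
      using sp span_mono[of "c ` {..<m}" "insert z (c ` {..<m})"] by blast
    moreover have "z \<in> span (insert z (c ` {..<m}))" by (rule span_base) simp
    ultimately have "insert z W \<subseteq> span (insert z (c ` {..<m}))" by blast
    then show "span (insert z W) \<subseteq> span (insert z (c ` {..<m}))"
      by (rule span_minimal) simp
  qed
  then show ?thesis unfolding isb_def c'_def[symmetric] using inj' ind' im by simp
qed

lemma sqrt_mult_norm: "sqrt (a * (x \<bullet> x)) = sqrt a * norm x"
  by (simp add: real_sqrt_mult norm_eq_sqrt_inner)

lemma stepA:
  fixes V :: "'a::euclidean_space set"
  assumes lin: "linear L" and V: "subspace V" and z: "z \<in> V" "norm z = 1"
  shows "\<exists>W. subspace W \<and> W \<subseteq> V \<and> Suc (dim W) = dim V \<and> abs_det_on L V \<le> abs_det_on L W * norm (L z)"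
proof -
  define W where "W = V \<inter> {w. z \<bullet> w = 0}"
  have sW: "subspace W" unfolding W_def
    using V by (auto simp: subspace_def inner_add_right)
  obtain c where c: "isb W (dim W) c" using ex_isb[OF sW] by blast
  define m where "m = dim W"
  have zz: "z \<bullet> z = 1" using z(2) by (simp add: norm_eq_sqrt_inner)
  have zW: "z \<notin> W" using zz by (auto simp: W_def)
  have c'': "isb (span (insert z W)) (Suc m) (c(m := z))" using isb_extend[OF c[folded m_def] zW] .
  have "span (insert z W) = V"
  proof (rule subset_antisym)
    have "insert z W \<subseteq> V" using z(1) by (auto simp: W_def)
    then show "span (insert z W) \<subseteq> V" using V by (rule span_minimal)
    show "V \<subseteq> span (insert z W)"
    proof
      fix v assume v: "v \<in> V"
      have a1: "z \<bullet> (v - (z \<bullet> v) *\<^sub>R z) = 0" using zz by (simp add: inner_diff_right)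
      have a2: "v - (z \<bullet> v) *\<^sub>R z \<in> V" using v z(1) V by (simp add: subspace_diff subspace_scale)
      have "v - (z \<bullet> v) *\<^sub>R z \<in> W" using a1 a2 by (simp add: W_def)
      then have "v - (z \<bullet> v) *\<^sub>R z \<in> span W" by (rule span_base)
      then show "v \<in> span (insert z W)" unfolding span_breakdown_eq by blast
    qed
  qed
  with c'' have c': "isb V (Suc m) (c(m := z))" by simp
  have dV: "dim V = Suc m" using isb_dim[OF c'] .
  have cW: "c i \<in> W" if "i < m" for i using c that unfolding isb_def m_def by (auto intro: span_base)
  have e1: "G (Suc m) (c(m := z)) = G m c"
  proof -
    have "G (Suc m) (c(m := z)) = G m (c(m := z)) * ((c(m := z)) m \<bullet> (c(m := z)) m)"
    proof (rule gram_orth)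
      fix i assume i: "i < m"
      then have "z \<bullet> c i = 0" using cW[OF i] by (simp add: W_def)
      then show "(c(m := z)) m \<bullet> (c(m := z)) i = 0" using i by simp
    qed
    also have "G m (c(m := z)) = G m c" by (rule G_cong) simp
    finally show ?thesis using zz by simp
  qed
  have e2: "G (Suc m) (L \<circ> c(m := z)) \<le> G m (L \<circ> c) * (L z \<bullet> L z)"
  proof -
    have "G (Suc m) (L \<circ> c(m := z)) \<le> G m (L \<circ> c(m := z)) * ((L \<circ> c(m := z)) m \<bullet> (L \<circ> c(m := z)) m)"
      by (rule gram_le)
    also have "G m (L \<circ> c(m := z)) = G m (L \<circ> c)" by (rule G_cong) simp
    finally show ?thesis by simp
  qed
  have "abs_det_on L V = sqrt (G (Suc m) (L \<circ> c(m := z))) / sqrt (G m c)"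
    using ratio_basis[OF lin V] c' dV e1 by (simp add: gram_vol_def)
  also have "\<dots> \<le> sqrt (G m (L \<circ> c) * (L z \<bullet> L z)) / sqrt (G m c)"
    using e2 gram_nonneg[of m c] by (intro divide_right_mono) auto
  also have "\<dots> = abs_det_on L W * norm (L z)"
    using ratio_basis[OF lin sW c] by (simp add: gram_vol_def sqrt_mult_norm m_def)
  finally have "abs_det_on L V \<le> abs_det_on L W * norm (L z)" .
  moreover have "W \<subseteq> V" by (auto simp: W_def)
  moreover have "Suc (dim W) = dim V" using dV by (simp add: m_def)
  ultimately show ?thesis using sW by blast
qed

lemma stepB:
  fixes V :: "'a::euclidean_space set"
  assumes lin: "linear L" and V: "subspace V" and y: "norm y = 1"
    and orth: "\<And>v. v \<in> V \<Longrightarrow> L y \<bullet> L v = 0" and Ly: "L y \<noteq> 0"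
  shows "dim (span (insert y V)) = Suc (dim V) \<and> abs_det_on L V * norm (L y) \<le> abs_det_on L (span (insert y V))"
proof -
  obtain c where c: "isb V (dim V) c" using ex_isb[OF V] by blast
  define m where "m = dim V"
  define W where "W = span (insert y V)"
  have sW: "subspace W" by (simp add: W_def)
  have yV: "y \<notin> V" using orth[of y] Ly by auto
  have c': "isb W (Suc m) (c(m := y))" unfolding W_def using isb_extend[OF c[folded m_def] yV] .
  have dW: "dim W = Suc m" using isb_dim[OF c'] .
  have yy: "y \<bullet> y = 1" using y by (simp add: norm_eq_sqrt_inner)
  have cV: "c i \<in> V" if "i < m" for i using c that unfolding isb_def m_def by (auto intro: span_base)
  have e1: "G (Suc m) (c(m := y)) \<le> G m c"
  proof -
    have "G (Suc m) (c(m := y)) \<le> G m (c(m := y)) * ((c(m := y)) m \<bullet> (c(m := y)) m)"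
      by (rule gram_le)
    also have "G m (c(m := y)) = G m c" by (rule G_cong) simp
    finally show ?thesis using yy by simp
  qed
  have e2: "G (Suc m) (L \<circ> c(m := y)) = G m (L \<circ> c) * (L y \<bullet> L y)"
  proof -
    have "G (Suc m) (L \<circ> c(m := y)) = G m (L \<circ> c(m := y)) * ((L \<circ> c(m := y)) m \<bullet> (L \<circ> c(m := y)) m)"
    proof (rule gram_orth)
      fix i assume i: "i < m"
      then have "L y \<bullet> L (c i) = 0" using cV[OF i] orth by simp
      then show "(L \<circ> c(m := y)) m \<bullet> (L \<circ> c(m := y)) i = 0" using i by simp
    qed
    also have "G m (L \<circ> c(m := y)) = G m (L \<circ> c)" by (rule G_cong) simp
    finally show ?thesis by simp
  qed
  have p1: "G (Suc m) (c(m := y)) > 0" using c' unfolding isb_def by (intro gram_pos) (auto simp only:)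
  have "abs_det_on L V * norm (L y) = sqrt (G m (L \<circ> c) * (L y \<bullet> L y)) / sqrt (G m c)"
    using ratio_basis[OF lin V c] by (simp add: gram_vol_def sqrt_mult_norm m_def)
  also have "\<dots> \<le> sqrt (G m (L \<circ> c) * (L y \<bullet> L y)) / sqrt (G (Suc m) (c(m := y)))"
    using e1 p1 gram_nonneg[of m "L \<circ> c"] by (intro divide_left_mono) auto
  also have "\<dots> = abs_det_on L W"
    using ratio_basis[OF lin sW] c' dW e2 by (simp add: gram_vol_def)
  finally show ?thesis using dW by (simp add: W_def m_def)
qed


lemma unit_in:
  fixes V :: "'a::euclidean_space set"
  assumes V: "subspace V" and d: "dim V > 0"
  obtains z where "z \<in> V" "norm z = 1"
proof -
  have "\<not> V \<subseteq> {0}" using d dim_eq_0 by (metis not_gr_zero)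
  then obtain v where v: "v \<in> V" "v \<noteq> 0" by blast
  have "v /\<^sub>R norm v \<in> V" using V v(1) by (simp add: subspace_scale)
  moreover have "norm (v /\<^sub>R norm v) = 1" using v(2) by simp
  ultimately show ?thesis using that by blast
qed

lemma abs_det_dim0:
  fixes V :: "'a::euclidean_space set"
  assumes d: "dim V = 0" shows "abs_det_on L V = 1"
  unfolding abs_det_on_def Let_def d gram_vol_def det_nat_0 by simp

lemma abs_det_bound:
  fixes L :: "'a::euclidean_space \<Rightarrow> 'a"
  assumes lin: "linear L"
  obtains B where "B > 0" "\<And>V. subspace V \<Longrightarrow> abs_det_on L V \<le> B ^ dim V"
proof -
  obtain B where B: "B > 0" "\<And>x. norm (L x) \<le> B * norm x" using linear_bounded_pos[OF lin] by blast
  have "\<forall>V. subspace V \<longrightarrow> dim V = n \<longrightarrow> abs_det_on L V \<le> B ^ n" for n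
  proof (induction n)
    case 0
    then show ?case using abs_det_dim0[of _ L] by (simp del: dim_eq_0)
  next
    case (Suc n)
    show ?case
    proof (intro allI impI)
      fix V :: "'a set" assume V: "subspace V" and d: "dim V = Suc n"
      obtain z where z: "z \<in> V" "norm z = 1" using unit_in[OF V] d by auto
      obtain W where W: "subspace W" "Suc (dim W) = dim V" "abs_det_on L V \<le> abs_det_on L W * norm (L z)"
        using stepA[OF lin V z] by blast
      have "abs_det_on L W \<le> B ^ n" using Suc.IH W d by auto
      moreover have "norm (L z) \<le> B" using B(2)[of z] z by simp
      ultimately have "abs_det_on L W * norm (L z) \<le> B ^ n * B"
        using abs_det_nonneg B(1) by (intro mult_mono) auto
      with W(3) show "abs_det_on L V \<le> B ^ Suc n" by (simp add: mult_ac)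
    qed
  qed
  then show ?thesis using that B(1) by blast
qed

lemma part1:
  fixes L :: "'a::euclidean_space \<Rightarrow> 'a"
  assumes lin: "linear L" and T: "subspace T" and E: "subspace E" "E \<subseteq> T"
    and contr: "\<And>z. z \<in> E \<Longrightarrow> norm (L z) \<le> norm z" and dT: "dim T = dim E + m"
  shows "subspace V \<Longrightarrow> V \<subseteq> T \<Longrightarrow> dim V = m + i \<Longrightarrow>
    \<exists>W. subspace W \<and> W \<subseteq> T \<and> dim W = m \<and> abs_det_on L V \<le> abs_det_on L W"
proof (induction i arbitrary: V)
  case 0
  then show ?case by auto
next
  case (Suc i)
  have sI: "dim {x + y |x y. x \<in> V \<and> y \<in> E} + dim (V \<inter> E) = dim V + dim E"
    by (rule dim_sums_Int[OF Suc.prems(1) E(1)])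
  have "{x + y |x y. x \<in> V \<and> y \<in> E} \<subseteq> T" using Suc.prems(2) E(2) T by (auto intro: subspace_add)
  then have "dim {x + y |x y. x \<in> V \<and> y \<in> E} \<le> dim T" by (rule dim_subset)
  then have "dim (V \<inter> E) > 0" using sI dT Suc.prems(3) by linarith
  then obtain z where z: "z \<in> V \<inter> E" "norm z = 1"
    using unit_in[OF subspace_inter[OF Suc.prems(1) E(1)]] by blast
  obtain W where W: "subspace W" "W \<subseteq> V" "Suc (dim W) = dim V" "abs_det_on L V \<le> abs_det_on L W * norm (L z)"
    using stepA[OF lin Suc.prems(1), of z] z by blast
  have "norm (L z) \<le> 1" using contr[of z] z by simp
  then have "abs_det_on L W * norm (L z) \<le> abs_det_on L W"
    using abs_det_nonneg[of L W] by (simp add: mult_left_le)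
  with W(4) have r: "abs_det_on L V \<le> abs_det_on L W" by linarith
  have "W \<subseteq> T" using W(2) Suc.prems(2) by blast
  moreover have "dim W = m + i" using W(3) Suc.prems(3) by simp
  ultimately obtain W' where "subspace W'" "W' \<subseteq> T" "dim W' = m" "abs_det_on L W \<le> abs_det_on L W'"
    using Suc.IH[OF W(1)] by blast
  then show ?case using r by (intro exI[of _ W']) auto
qed


lemma part2:
  fixes L :: "'a::euclidean_space \<Rightarrow> 'a"
  assumes lin: "linear L" and T: "subspace T" and E: "subspace E" "E \<subseteq> T"
    and expd: "\<And>z. z \<in> E \<Longrightarrow> norm z \<le> norm (L z)"
  shows "subspace V \<Longrightarrow> V \<subseteq> T \<Longrightarrow> dim V + i = dim E \<Longrightarrow>
    \<exists>W. subspace W \<and> W \<subseteq> T \<and> dim W = dim E \<and> abs_det_on L V \<le> abs_det_on L W"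
proof (induction i arbitrary: V)
  case 0
  then show ?case by auto
next
  case (Suc i)
  note V = Suc.prems(1)
  obtain c where c: "isb V (dim V) c" using ex_isb[OF V] by blast
  define m where "m = dim V"
  have spc: "span (c ` {..<m}) = V" using c unfolding isb_def m_def by blast
  define \<psi> where "\<psi> = (\<lambda>w. \<Sum>j<m. (L w \<bullet> L (c j)) *\<^sub>R L (c j))"
  have lpsi: "linear \<psi>"
  proof (rule linearI)
    fix x y
    show "\<psi> (x + y) = \<psi> x + \<psi> y"
      unfolding \<psi>_def by (simp add: linear_add[OF lin] inner_add_left scaleR_add_left sum.distrib)
  next
    fix r x
    show "\<psi> (r *\<^sub>R x) = r *\<^sub>R \<psi> x"
      unfolding \<psi>_def by (simp add: linear_scale[OF lin] scaleR_sum_right)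
  qed
  have "\<psi> ` E \<subseteq> span ((L \<circ> c) ` {..<m})"
  proof
    fix v assume "v \<in> \<psi> ` E"
    then obtain w where vw: "v = \<psi> w" by blast
    have "\<psi> w \<in> span ((L \<circ> c) ` {..<m})"
      unfolding \<psi>_def by (rule span_sum, rule span_scale, rule span_base) auto
    then show "v \<in> span ((L \<circ> c) ` {..<m})" using vw by simp
  qed
  then have "dim (\<psi> ` E) \<le> card ((L \<circ> c) ` {..<m})" by (rule dim_le_card) simp
  also have "\<dots> \<le> m" using card_image_le[of "{..<m}" "L \<circ> c"] by simp
  finally have dle: "dim (\<psi> ` E) \<le> m" .
  have "\<not> inj_on \<psi> E"
  proof
    assume ij: "inj_on \<psi> E"
    have sE: "span E = E" using E(1) by simp
    have "inj_on \<psi> (span E)" unfolding sE by (rule ij)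
    then have "dim (\<psi> ` E) = dim E" by (rule dim_image_eq[OF lpsi])
    then show False using dle Suc.prems(3) m_def by simp
  qed
  then obtain w1 w2 where w: "w1 \<in> E" "w2 \<in> E" "w1 \<noteq> w2" "\<psi> w1 = \<psi> w2"
    unfolding inj_on_def by blast
  define y0 where "y0 = w1 - w2"
  have y0E: "y0 \<in> E" using w E(1) by (simp add: y0_def subspace_diff)
  have y0n: "y0 \<noteq> 0" using w by (simp add: y0_def)
  have py0: "\<psi> y0 = 0" using w by (simp add: y0_def linear_diff[OF lpsi])
  have "L y0 \<bullet> \<psi> y0 = (\<Sum>j<m. (L y0 \<bullet> L (c j))^2)"
    unfolding \<psi>_def by (simp add: inner_sum_right power2_eq_square)
  then have "(\<Sum>j<m. (L y0 \<bullet> L (c j))^2) = 0" using py0 by simp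
  then have oc: "L y0 \<bullet> L (c j) = 0" if "j < m" for j
    using that by (subst (asm) sum_nonneg_eq_0_iff) auto
  have orth0: "L y0 \<bullet> L v = 0" if "v \<in> V" for v
  proof -
    have "v \<in> span (c ` {..<m})" using that spc by simp
    then obtain a where a: "v = (\<Sum>j<m. a j *\<^sub>R c j)" using span_idx by blast
    have "L v = (\<Sum>j<m. a j *\<^sub>R L (c j))" unfolding a by (simp add: linear_sum[OF lin] linear_scale[OF lin])
    then show ?thesis by (simp add: inner_sum_right oc)
  qed
  define y where "y = y0 /\<^sub>R norm y0"
  have yE: "y \<in> E" using y0E E(1) by (simp add: y_def subspace_scale)
  have ny: "norm y = 1" using y0n by (simp add: y_def)
  have Ly: "L y = (1 / norm y0) *\<^sub>R L y0" by (simp add: y_def linear_scale[OF lin] divide_inverse)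
  have orth: "L y \<bullet> L v = 0" if "v \<in> V" for v using orth0[OF that] by (simp add: Ly)
  have nLy: "norm (L y) \<ge> 1" using expd[OF yE] ny by simp
  then have Ly0: "L y \<noteq> 0" by auto
  have sB: "dim (span (insert y V)) = Suc (dim V) \<and> abs_det_on L V * norm (L y) \<le> abs_det_on L (span (insert y V))"
    by (rule stepB[OF lin V ny orth Ly0])
  have "abs_det_on L V \<le> abs_det_on L V * norm (L y)"
    using nLy abs_det_nonneg[of L V] by (simp add: mult_le_cancel_left1)
  with sB have r: "abs_det_on L V \<le> abs_det_on L (span (insert y V))" by linarith
  have WT: "span (insert y V) \<subseteq> T" using yE E(2) Suc.prems(2) T by (intro span_minimal) auto
  have "dim (span (insert y V)) + i = dim E" using sB Suc.prems(3) by simp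
  then obtain W' where "subspace W'" "W' \<subseteq> T" "dim W' = dim E" "abs_det_on L (span (insert y V)) \<le> abs_det_on L W'"
    using Suc.IH[of "span (insert y V)"] WT by auto
  then show ?case using r by (intro exI[of _ W']) auto
qed


lemma exists_sub:
  fixes T :: "'a::euclidean_space set"
  assumes T: "subspace T" and k: "k \<le> dim T"
  shows "\<exists>V. subspace V \<and> V \<subseteq> T \<and> dim V = k"
proof -
  obtain B where B: "B \<subseteq> T" "independent B" "T \<subseteq> span B" "card B = dim T" by (rule basis_exists)
  obtain B' where B': "B' \<subseteq> B" "card B' = k" "finite B'" using obtain_subset_with_card_n[of k B] k B(4) by auto
  have iB': "independent B'" using B(2) B'(1) by (rule independent_mono)
  have "dim (span B') = k" using dim_eq_card_independent[OF iB'] B'(2) by simp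
  moreover have "span B' \<subseteq> T" using B'(1) B(1) T by (intro span_minimal) auto
  ultimately show ?thesis by (intro exI[of _ "span B'"]) auto
qed

lemma bdd_dets:
  fixes L :: "'a::euclidean_space \<Rightarrow> 'a"
  assumes lin: "linear L"
  shows "bdd_above {abs_det_on L V | V. subspace V \<and> V \<subseteq> T \<and> dim V = k}"
proof -
  obtain B where B: "B > 0" "\<And>V. subspace V \<Longrightarrow> abs_det_on L V \<le> B ^ dim V"
    using abs_det_bound[OF lin] by blast
  show ?thesis unfolding bdd_above_def using B(2) by (intro exI[of _ "B ^ k"]) auto
qed

lemma maxdet1:
  fixes L :: "'a::euclidean_space \<Rightarrow> 'a"
  assumes lin: "linear L" and T: "subspace T" and E: "subspace E" "E \<subseteq> T"
    and contr: "\<And>z. z \<in> E \<Longrightarrow> norm (L z) \<le> norm z" and dT: "dim T = dim E + m"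
    and i: "i \<le> dim E"
  shows "max_det L T (i + m) \<le> max_det L T m"
  unfolding max_det_def
proof (rule cSup_least)
  show "{abs_det_on L V |V. subspace V \<and> V \<subseteq> T \<and> dim V = i + m} \<noteq> {}"
    using exists_sub[OF T, of "i + m"] i dT by auto
next
  fix x assume "x \<in> {abs_det_on L V |V. subspace V \<and> V \<subseteq> T \<and> dim V = i + m}"
  then obtain V where V: "x = abs_det_on L V" "subspace V" "V \<subseteq> T" "dim V = m + i" by auto
  obtain W where W: "subspace W" "W \<subseteq> T" "dim W = m" "abs_det_on L V \<le> abs_det_on L W"
    using part1[OF lin T E contr dT V(2,3,4)] by blast
  have "abs_det_on L W \<le> Sup {abs_det_on L V |V. subspace V \<and> V \<subseteq> T \<and> dim V = m}"
    by (rule cSup_upper) (use W bdd_dets[OF lin] in auto)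
  then show "x \<le> Sup {abs_det_on L V |V. subspace V \<and> V \<subseteq> T \<and> dim V = m}" using V(1) W(4) by linarith
qed

lemma maxdet2:
  fixes L :: "'a::euclidean_space \<Rightarrow> 'a"
  assumes lin: "linear L" and T: "subspace T" and E: "subspace E" "E \<subseteq> T"
    and expd: "\<And>z. z \<in> E \<Longrightarrow> norm z \<le> norm (L z)" and i: "i \<le> dim E"
  shows "max_det L T i \<le> max_det L T (dim E)"
  unfolding max_det_def
proof (rule cSup_least)
  have "dim E \<le> dim T" using E(2) by (rule dim_subset)
  then show "{abs_det_on L V |V. subspace V \<and> V \<subseteq> T \<and> dim V = i} \<noteq> {}"
    using exists_sub[OF T, of i] i by auto
next
  fix x assume "x \<in> {abs_det_on L V |V. subspace V \<and> V \<subseteq> T \<and> dim V = i}"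
  then obtain V where V: "x = abs_det_on L V" "subspace V" "V \<subseteq> T" "dim V = i" by auto
  have "dim V + (dim E - i) = dim E" using V(4) i by simp
  then obtain W where W: "subspace W" "W \<subseteq> T" "dim W = dim E" "abs_det_on L V \<le> abs_det_on L W"
    using part2[OF lin T E expd V(2,3)] by blast
  have "abs_det_on L W \<le> Sup {abs_det_on L V |V. subspace V \<and> V \<subseteq> T \<and> dim V = dim E}"
    by (rule cSup_upper) (use W bdd_dets[OF lin] in auto)
  then show "x \<le> Sup {abs_det_on L V |V. subspace V \<and> V \<subseteq> T \<and> dim V = dim E}" using V(1) W(4) by linarith
qed


lemma deriv_unique_tangent:
  fixes g :: "'a::euclidean_space \<Rightarrow> 'a"
  assumes d1: "(g has_derivative D1) (at x within M)" and d2: "(g has_derivative D2) (at x within M)"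
    and v: "v \<in> tangent_space M x"
  shows "D1 v = D2 v"
proof -
  obtain \<gamma> :: "real \<Rightarrow> 'a" where \<gamma>: "\<forall>t. \<gamma> t \<in> M" "\<gamma> 0 = x" "(\<gamma> has_vector_derivative v) (at 0)"
    using v unfolding tangent_space_def by blast
  have gd: "(\<gamma> has_derivative (\<lambda>t. t *\<^sub>R v)) (at 0 within UNIV)"
    using \<gamma>(3) by (simp add: has_vector_derivative_def)
  have sub: "\<gamma> ` UNIV \<subseteq> M" using \<gamma>(1) by auto
  have e1: "(g has_derivative D1) (at (\<gamma> 0) within (\<gamma> ` UNIV))"
    using has_derivative_subset[OF d1 sub] \<gamma>(2) by simp
  have e2: "(g has_derivative D2) (at (\<gamma> 0) within (\<gamma> ` UNIV))"
    using has_derivative_subset[OF d2 sub] \<gamma>(2) by simp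
  have c1: "((g \<circ> \<gamma>) has_derivative (D1 \<circ> (\<lambda>t. t *\<^sub>R v))) (at 0)"
    using diff_chain_within[OF gd e1] by simp
  have c2: "((g \<circ> \<gamma>) has_derivative (D2 \<circ> (\<lambda>t. t *\<^sub>R v))) (at 0)"
    using diff_chain_within[OF gd e2] by simp
  have "D1 \<circ> (\<lambda>t. t *\<^sub>R v) = D2 \<circ> (\<lambda>t. t *\<^sub>R v)" using has_derivative_unique[OF c1 c2] .
  then have "(D1 \<circ> (\<lambda>t. t *\<^sub>R v)) 1 = (D2 \<circ> (\<lambda>t. t *\<^sub>R v)) 1" by simp
  then show ?thesis by simp
qed

lemma C1_map_deriv:
  fixes g :: "'a::euclidean_space \<Rightarrow> 'a"
  assumes g: "C1_map_on M g" and x: "x \<in> M"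
  shows "\<exists>D. (g has_derivative D) (at x within M)"
proof -
  obtain U F where U: "open U" "x \<in> U" "C1_on U F" "\<forall>y\<in>M \<inter> U. F y = g y"
    using g x unfolding C1_map_on_def by blast
  obtain F' where F': "\<forall>y\<in>U. (F has_derivative blinfun_apply (F' y)) (at y)"
    using U(3) unfolding C1_on_def by blast
  have Fd: "(F has_derivative blinfun_apply (F' x)) (at x within M)"
    using F' U(2) has_derivative_at_withinI by blast
  obtain d where d: "d > 0" "ball x d \<subseteq> U" using U(1,2) openE by blast
  have "(g has_derivative blinfun_apply (F' x)) (at x within M)"
  proof (rule has_derivative_transform_within[OF Fd d(1) x])
    fix x' assume "x' \<in> M" "dist x' x < d"
    then have "x' \<in> M \<inter> U" using d(2) by (auto simp: dist_commute)
    then show "F x' = g x'" using U(4) by blast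
  qed
  then show ?thesis by blast
qed

lemma funpow_in: "g ` M \<subseteq> M \<Longrightarrow> x \<in> M \<Longrightarrow> (g ^^ n) x \<in> M"
  by (induction n) auto

lemma funpow_deriv:
  fixes g :: "'a::euclidean_space \<Rightarrow> 'a"
  assumes g: "C1_map_on M g" and x: "x \<in> M"
  shows "\<exists>D. ((g ^^ n) has_derivative D) (at x within M)"
proof (induction n)
  case 0
  show ?case unfolding funpow.simps(1) id_def by (rule exI, rule has_derivative_ident)
next
  case (Suc n)
  then obtain D where D: "((g ^^ n) has_derivative D) (at x within M)" by blast
  have gM: "g ` M \<subseteq> M" using g unfolding C1_map_on_def by blast
  obtain D' where D': "(g has_derivative D') (at ((g ^^ n) x) within M)"
    using C1_map_deriv[OF g funpow_in[OF gM x]] by blast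
  have "(g ^^ n) ` M \<subseteq> M" using funpow_in[OF gM] by blast
  then have "(g has_derivative D') (at ((g ^^ n) x) within ((g ^^ n) ` M))"
    using has_derivative_subset[OF D'] by blast
  from diff_chain_within[OF D this] show ?case unfolding funpow.simps(2) by blast
qed

lemma diffM_has:
  fixes g :: "'a::euclidean_space \<Rightarrow> 'a"
  assumes "C1_map_on M g" "x \<in> M"
  shows "((g ^^ n) has_derivative diffM M (g ^^ n) x) (at x within M)"
  unfolding diffM_def using funpow_deriv[OF assms, of n] by (rule someI_ex)

lemma diffM1_has:
  fixes g :: "'a::euclidean_space \<Rightarrow> 'a"
  assumes "C1_map_on M g" "x \<in> M"
  shows "(g has_derivative diffM M g x) (at x within M)"
  unfolding diffM_def using C1_map_deriv[OF assms] by (rule someI_ex)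

lemma diffM_chain:
  fixes g :: "'a::euclidean_space \<Rightarrow> 'a"
  assumes g: "C1_map_on M g" and x: "x \<in> M" and v: "v \<in> tangent_space M x"
  shows "diffM M (g ^^ Suc n) x v = diffM M g ((g ^^ n) x) (diffM M (g ^^ n) x v)"
proof -
  have gM: "g ` M \<subseteq> M" using g unfolding C1_map_on_def by blast
  have "(g ^^ n) ` M \<subseteq> M" using funpow_in[OF gM] by blast
  then have "(g has_derivative diffM M g ((g ^^ n) x)) (at ((g ^^ n) x) within ((g ^^ n) ` M))"
    using has_derivative_subset[OF diffM1_has[OF g funpow_in[OF gM x]]] by blast
  from diff_chain_within[OF diffM_has[OF g x, of n] this]
  have "((g ^^ Suc n) has_derivative (diffM M g ((g ^^ n) x) \<circ> diffM M (g ^^ n) x)) (at x within M)"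
    by simp
  from deriv_unique_tangent[OF diffM_has[OF g x, of "Suc n"] this v] show ?thesis by simp
qed

lemma diffM_0:
  fixes g :: "'a::euclidean_space \<Rightarrow> 'a"
  assumes g: "C1_map_on M g" and x: "x \<in> M" and v: "v \<in> tangent_space M x"
  shows "diffM M (g ^^ 0) x v = v"
proof -
  have "((g ^^ 0) has_derivative (\<lambda>x. x)) (at x within M)"
    unfolding funpow.simps(1) id_def by (rule has_derivative_ident)
  from deriv_unique_tangent[OF diffM_has[OF g x, of 0] this v] show ?thesis .
qed

lemma invariant_iter:
  fixes f :: "'a::euclidean_space \<Rightarrow> 'a"
  assumes f: "C1_map_on M f" and inv: "\<forall>y\<in>M. diffM M f y ` E y = E (f y)"
    and ET: "\<forall>y\<in>M. E y \<subseteq> tangent_space M y" and x: "x \<in> M" and v: "v \<in> E x"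
  shows "diffM M (f ^^ n) x v \<in> E ((f ^^ n) x)"
proof (induction n)
  case 0
  have vT: "v \<in> tangent_space M x" using ET x v by blast
  have "diffM M (f ^^ 0) x v = v" by (rule diffM_0[OF f x vT])
  moreover have "(f ^^ 0) x = x" by simp
  ultimately show ?case using v by metis
next
  case (Suc n)
  have fM: "f ` M \<subseteq> M" using f unfolding C1_map_on_def by blast
  have vT: "v \<in> tangent_space M x" using ET x v by blast
  have yM: "(f ^^ n) x \<in> M" using funpow_in[OF fM x] .
  have "diffM M f ((f ^^ n) x) (diffM M (f ^^ n) x v) \<in> E (f ((f ^^ n) x))"
    using inv yM Suc.IH by blast
  then show ?case using diffM_chain[OF f x vT, of n] by (simp add: o_def)
qed

lemma inv_funpow:
  assumes f: "bij_betw f M M" and z: "z \<in> M"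
  shows "(inv_into M f ^^ n) ((f ^^ n) z) = z"
proof (induction n)
  case 0 then show ?case by simp
next
  case (Suc n)
  have fM: "f ` M \<subseteq> M" using f by (simp add: bij_betw_def)
  have "inj_on f M" using f by (simp add: bij_betw_def)
  then have "inv_into M f (f ((f ^^ n) z)) = (f ^^ n) z" using funpow_in[OF fM z] by (simp add: inv_into_f_f)
  moreover have "(f ^^ Suc n) z = f ((f ^^ n) z)" by simp
  moreover have "(inv_into M f ^^ Suc n) w = (inv_into M f ^^ n) (inv_into M f w)" for w
    by (simp add: funpow_Suc_right del: funpow.simps)
  ultimately show ?case using Suc.IH by simp
qed

lemma back_deriv:
  fixes f :: "'a::euclidean_space \<Rightarrow> 'a"
  assumes f: "C1_diffeo_of M f" and x: "x \<in> M" and v: "v \<in> tangent_space M x"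
  shows "diffM M (inv_into M f ^^ n) ((f ^^ n) x) (diffM M (f ^^ n) x v) = v"
proof -
  define h where "h = inv_into M f"
  have fC: "C1_map_on M f" and hC: "C1_map_on M h" and bij: "bij_betw f M M"
    using f unfolding C1_diffeo_of_def h_def by auto
  have fM: "f ` M \<subseteq> M" using fC unfolding C1_map_on_def by blast
  have yM: "(f ^^ n) x \<in> M" using funpow_in[OF fM x] .
  have "(f ^^ n) ` M \<subseteq> M" using funpow_in[OF fM] by blast
  then have "((h ^^ n) has_derivative diffM M (h ^^ n) ((f ^^ n) x)) (at ((f ^^ n) x) within ((f ^^ n) ` M))"
    using has_derivative_subset[OF diffM_has[OF hC yM, of n]] by blast
  from diff_chain_within[OF diffM_has[OF fC x, of n] this]
  have ch: "(((h ^^ n) \<circ> (f ^^ n)) has_derivative (diffM M (h ^^ n) ((f ^^ n) x) \<circ> diffM M (f ^^ n) x)) (at x within M)" .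
  have "((\<lambda>z. z) has_derivative (diffM M (h ^^ n) ((f ^^ n) x) \<circ> diffM M (f ^^ n) x)) (at x within M)"
  proof (rule has_derivative_transform_within[where d=1])
    show "x \<in> M" by (rule x)
    show "(0::real) < 1" by simp
    show "(((h ^^ n) \<circ> (f ^^ n)) has_derivative (diffM M (h ^^ n) ((f ^^ n) x) \<circ> diffM M (f ^^ n) x)) (at x within M)" by (rule ch)
    fix x' assume "x' \<in> M"
    then show "((h ^^ n) \<circ> (f ^^ n)) x' = x'" using inv_funpow[OF bij] by (simp add: h_def)
  qed
  from deriv_unique_tangent[OF this has_derivative_ident v] show ?thesis by (simp add: h_def)
qed


theorem mainTheorem11:
  fixes M :: "'a::euclidean_space set" and f :: "'a \<Rightarrow> 'a"
    and Es Eu :: "'a \<Rightarrow> 'a set" and Ec :: "nat \<Rightarrow> 'a \<Rightarrow> 'a set"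
    and l s u :: nat
  assumes "compact M" and "C1_submanifold M" and "C1_diffeo_of M f"
    and "partially_hyperbolic_splitting M f Es Ec l Eu"
    and "\<forall>i\<in>{1..l}. \<forall>x\<in>M. dim (Ec i x) = 1"
    and "\<forall>x\<in>M. dim (Es x) = s" and "\<forall>x\<in>M. dim (Eu x) = u"
  shows "\<exists>T2::nat. \<forall>x\<in>M. \<forall>n\<ge>T2.
           (\<forall>i_s\<in>{1..s}. max_det (diffM M (f ^^ n) x) (tangent_space M x) (i_s + l + u)
                          \<le> max_det (diffM M (f ^^ n) x) (tangent_space M x) (l + u)) \<and>
           (\<forall>i_u\<in>{1..u}. max_det (diffM M (f ^^ n) x) (tangent_space M x) i_u
                          \<le> max_det (diffM M (f ^^ n) x) (tangent_space M x) u)"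
proof -
  note fd = assms(3)
  have fC: "C1_map_on M f" and bij: "bij_betw f M M" using fd unfolding C1_diffeo_of_def by auto
  have fM: "f ` M \<subseteq> M" using fC unfolding C1_map_on_def by blast
  have A1: "\<forall>x\<in>M. subspace (Es x) \<and> subspace (Eu x) \<and> (\<forall>i\<in>{1..l}. subspace (Ec i x)) \<and>
        span (Es x \<union> (\<Union>i\<in>{1..l}. Ec i x) \<union> Eu x) = tangent_space M x \<and>
        dim (Es x) + (\<Sum>i=1..l. dim (Ec i x)) + dim (Eu x) = dim (tangent_space M x)"
    and A2: "\<forall>i\<in>{0..l}. dominated_splitting M f
        (\<lambda>x. span (Es x \<union> (\<Union>j\<in>{1..i}. Ec j x)))
        (\<lambda>x. span ((\<Union>j\<in>{i+1..l}. Ec j x) \<union> Eu x))"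
    and A3: "\<exists>C lam. C > 0 \<and> 0 < lam \<and> lam < 1 \<and>
        (\<forall>x\<in>M. \<forall>k::nat.
           (\<forall>v\<in>Es x. norm (diffM M (f ^^ k) x v) \<le> C * lam ^ k * norm v) \<and>
           (\<forall>v\<in>Eu x. norm (diffM M (inv_into M f ^^ k) x v) \<le> C * lam ^ k * norm v))"
    using assms(4) unfolding partially_hyperbolic_splitting_def by blast+
  obtain C lam where C: "C > 0" "0 < lam" "lam < 1" and
    hyp: "\<And>x k. x \<in> M \<Longrightarrow> (\<forall>v\<in>Es x. norm (diffM M (f ^^ k) x v) \<le> C * lam ^ k * norm v) \<and>
           (\<forall>v\<in>Eu x. norm (diffM M (inv_into M f ^^ k) x v) \<le> C * lam ^ k * norm v)"
    using A3 by blast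
  have "dominated_splitting M f (\<lambda>x. span (Es x \<union> (\<Union>j\<in>{1..l}. Ec j x)))
        (\<lambda>x. span ((\<Union>j\<in>{l+1..l}. Ec j x) \<union> Eu x))"
    using A2 by (rule bspec) simp
  then have invF: "invariant_subbundle M f (\<lambda>x. span ((\<Union>j\<in>{l+1..l}. Ec j x) \<union> Eu x))"
    unfolding dominated_splitting_def by blast
  have spEu: "span ((\<Union>j\<in>{l+1..l}. Ec j x) \<union> Eu x) = Eu x" if "x \<in> M" for x
    using A1 that by simp
  have invEu: "\<forall>y\<in>M. diffM M f y ` Eu y = Eu (f y)"
  proof
    fix y assume y: "y \<in> M"
    have "f y \<in> M" using fM y by blast
    then show "diffM M f y ` Eu y = Eu (f y)"
      using invF y spEu[OF y] spEu[of "f y"] unfolding invariant_subbundle_def by metis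
  qed
  have EuT: "\<forall>y\<in>M. Eu y \<subseteq> tangent_space M y"
    using A1 by (metis span_superset sup.bounded_iff)
  have EsT: "\<forall>y\<in>M. Es y \<subseteq> tangent_space M y"
    using A1 by (metis span_superset sup.bounded_iff)
  have "\<exists>N. lam ^ N < 1 / C" using real_arch_pow_inv[of "1 / C" lam] C by simp
  then obtain N where N: "lam ^ N < 1 / C" by blast
  have small: "C * lam ^ n \<le> 1" if "n \<ge> N" for n
  proof -
    have "lam ^ n \<le> lam ^ N" using power_decreasing[of N n lam] that C by simp
    also have "\<dots> \<le> 1 / C" using N by simp
    finally show ?thesis using C(1) by (simp add: field_simps)
  qed
  show ?thesis
  proof (rule exI[of _ N], intro ballI allI impI)
    fix x n assume x: "x \<in> M" and n: "N \<le> n"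
    define L where "L = diffM M (f ^^ n) x"
    define T where "T = tangent_space M x"
    have lin: "linear L" unfolding L_def
      using diffM_has[OF fC x, of n] has_derivative_linear by blast
    have sT: "subspace T" unfolding T_def using A1 x by (metis subspace_span)
    have sEs: "subspace (Es x)" and sEu: "subspace (Eu x)" using A1 x by auto
    have EsT': "Es x \<subseteq> T" and EuT': "Eu x \<subseteq> T" using EsT EuT x T_def by auto
    have "(\<Sum>i=1..l. dim (Ec i x)) = (\<Sum>i=1..l. (1::nat))" using assms(5) x by (intro sum.cong) auto
    then have "(\<Sum>i=1..l. dim (Ec i x)) = l" by simp
    then have dT: "dim T = dim (Es x) + (l + u)" using A1 x assms(7) unfolding T_def by auto
    have sm: "C * lam ^ n \<le> 1" using small[OF n] .
    have contr: "norm (L z) \<le> norm z" if "z \<in> Es x" for z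
    proof -
      have "norm (L z) \<le> C * lam ^ n * norm z" using hyp[OF x, of n] that unfolding L_def by blast
      also have "\<dots> \<le> 1 * norm z" using sm by (intro mult_right_mono) auto
      finally show ?thesis by simp
    qed
    have expd: "norm z \<le> norm (L z)" if z: "z \<in> Eu x" for z
    proof -
      have zT: "z \<in> tangent_space M x" using EuT x z by blast
      have yM: "(f ^^ n) x \<in> M" using funpow_in[OF fM x] .
      have w: "L z \<in> Eu ((f ^^ n) x)" unfolding L_def by (rule invariant_iter[OF fC invEu EuT x z])
      have "norm (diffM M (inv_into M f ^^ n) ((f ^^ n) x) (L z)) \<le> C * lam ^ n * norm (L z)"
        using hyp[OF yM, of n] w by blast
      then have "norm z \<le> C * lam ^ n * norm (L z)" using back_deriv[OF fd x zT, of n] unfolding L_def by simp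
      also have "\<dots> \<le> 1 * norm (L z)" using sm by (intro mult_right_mono) auto
      finally show ?thesis by simp
    qed
    show "(\<forall>i_s\<in>{1..s}. max_det (diffM M (f ^^ n) x) (tangent_space M x) (i_s + l + u)
                          \<le> max_det (diffM M (f ^^ n) x) (tangent_space M x) (l + u)) \<and>
           (\<forall>i_u\<in>{1..u}. max_det (diffM M (f ^^ n) x) (tangent_space M x) i_u
                          \<le> max_det (diffM M (f ^^ n) x) (tangent_space M x) u)"
    proof (intro conjI ballI)
      fix i assume i: "i \<in> {1..s}"
      have "max_det L T (i + (l + u)) \<le> max_det L T (l + u)"
        using maxdet1[OF lin sT sEs EsT' contr dT] i assms(6) x by auto
      then show "max_det (diffM M (f ^^ n) x) (tangent_space M x) (i + l + u)
                          \<le> max_det (diffM M (f ^^ n) x) (tangent_space M x) (l + u)"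
        unfolding L_def T_def by (simp add: add.assoc)
    next
      fix i assume i: "i \<in> {1..u}"
      have "max_det L T i \<le> max_det L T (dim (Eu x))"
        using maxdet2[OF lin sT sEu EuT' expd] i assms(7) x by auto
      then show "max_det (diffM M (f ^^ n) x) (tangent_space M x) i
                          \<le> max_det (diffM M (f ^^ n) x) (tangent_space M x) u"
        unfolding L_def T_def using assms(7) x by simp
    qed
  qed
qed


end
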